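(* (Metatheory of CPL* natural deduction.) Fix a set $W$ of worlds with a converse well-founded accessibility relation $\prec$. For all contexts $\Gamma,\Gamma'$, worlds $w, w'$, and propositions $A, C$: (i) (Hypothesis) If $A[w] \in \Gamma$, then $\Gamma \vdash_{\mathbf{CPL*}} A[w]$. (ii) (Generalized weakening) If $\Gamma \subseteq_w \Gamma'$ and $\Gamma \vdash_{\mathbf{CPL*}} A[w]$, then $\Gamma' \vdash_{\mathbf{CPL*}} A[w]$. (iii) (Substitution) If $w' \prec^* w$, $\Gamma \vdash_{\mathbf{CPL*}} A[w]$, and $\Gamma, A[w] \vdash_{\mathbf{CPL*}} C[w']$, then $\Gamma \vdash_{\mathbf{CPL*}} C[w']$.
   Context: Fix a set $W$ of worlds and a binary accessibility relation $\prec$ on $W$ that is converse well-founded: there is no infinite chain $w_0 \prec w_1 \prec w_2 \prec \cdots$. $\prec^*$ and $\prec^+$ denote reflexive–transitive and transitive closures. Propositions: $A,B,C ::= Q \mid \bot \mid A \supset B \mid \Diamond A \mid \Box A$, $Q$ atomic. A context $\Gamma$ is a finite collection of judgments $A[w]$ ($w\in W$). $\Gamma \subseteq_w \Gamma'$ holds iff (a) for all $w'$ with $w \prec^* w'$, $A[w'] \in \Gamma$ implies $A[w'] \in \Gamma'$, and (b) for all $w'$ with $w \prec^+ w'$, $A[w'] \in \Gamma'$ implies $A[w'] \in \Gamma$. The judgment $\Gamma \vdash_{\mathbf{CPL*}} A[w]$ (natural deduction for de-tethered constructive provability logic) is defined one world at a time (provability at $w$ after provability at all $w'$ with $w\prec^+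 w'$; well-defined by converse well-foundedness) as the least relation closed under (premises may be meta-level quantifications/implications): (hyp) $\Gamma, A[w] \vdash A[w]$. ($\bot E$) If $w' \prec^* w$ and $\Gamma \vdash \bot[w]$ then $\Gamma \vdash C[w']$. ($\supset I$) If $\Gamma, A[w] \vdash B[w]$ then $\Gamma \vdash A \supset B[w]$. ($\supset E$) If $\Gamma \vdash A \supset B[w]$ and $\Gamma \vdash A[w]$ then $\Gamma \vdash B[w]$. ($\Diamond I$) If $w \prec w'$ and $\Gamma \vdash A[w']$ then $\Gamma \vdash \Diamond A[w]$. ($\Box I$) If $\Gamma \vdash A[w']$ for every $w'$ with $w \prec w'$, then $\Gamma \vdash \Box A[w]$. ($\Diamond E$) If $w'' \prec^* w$, $\Gamma \vdash \Diamond A[w]$, and for every $w'$ with $w \prec w'$, $\Gamma \vdash A[w']$ implies $\Gamma \vdash C[w'']$, then $\Gamma \vdash C[w'']$. ($\Box E$) If $w'' \prec^* w$, $\Gamma \vdash \Box A[w]$, and ($\Gamma \vdash A[w']$ for all $w'$ with $w \prec w'$) implies $\Gamma \vdash C[w'']$, then $\Gamma \vdash C[w'']$. *)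

theory Defs
  imports Main
begin

datatype 'q fml = Atom 'q | Bot | Imp "'q fml" "'q fml" | Dia "'q fml" | Box "'q fml"

text \<open>Worlds are the elements of the world type; acc is the accessibility relation.
A context is a (finite) set of judgments A[w], represented as pairs (A, w).\<close>
type_synonym ('q, 'w) ctx = "('q fml \<times> 'w) set"

definition conv_wf :: "('w \<Rightarrow> 'w \<Rightarrow> bool) \<Rightarrow> bool" where
  "conv_wf acc \<longleftrightarrow> \<not> (\<exists>f :: nat \<Rightarrow> 'w. \<forall>i. acc (f i) (f (Suc i)))"

definition ctx_sub :: "('w \<Rightarrow> 'w \<Rightarrow> bool) \<Rightarrow> 'w \<Rightarrow> ('q, 'w) ctx \<Rightarrow> ('q, 'w) ctx \<Rightarrow> bool" where
  "ctx_sub acc w \<Gamma> \<Gamma>' \<longleftrightarrow>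
     (\<forall>w' A. acc\<^sup>*\<^sup>* w w' \<longrightarrow> (A, w') \<in> \<Gamma> \<longrightarrow> (A, w') \<in> \<Gamma>') \<and>
     (\<forall>w' A. acc\<^sup>+\<^sup>+ w w' \<longrightarrow> (A, w') \<in> \<Gamma>' \<longrightarrow> (A, w') \<in> \<Gamma>)"

text \<open>H gives provability (pairs (context, proposition)) at
strictly higher worlds (already defined); S is the candidate relation at the current world w.
Provability at w is the least fixed point of this (monotone in S) operator.\<close>
definition cpl_step ::
  "('w \<Rightarrow> 'w \<Rightarrow> bool) \<Rightarrow> ('w \<Rightarrow> (('q, 'w) ctx \<times> 'q fml) set) \<Rightarrow> 'w
     \<Rightarrow> (('q, 'w) ctx \<times> 'q fml) set \<Rightarrow> (('q, 'w) ctx \<times> 'q fml) set" where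
  "cpl_step acc H w S =
    (let P = (\<lambda>v. if v = w then S else H v) in
     {(\<Gamma>, C).
        \<comment> \<open>hyp\<close>
        (C, w) \<in> \<Gamma>
      \<or> \<comment> \<open>bot E\<close>
        (\<exists>v. acc\<^sup>*\<^sup>* w v \<and> (\<Gamma>, Bot) \<in> P v)
      \<or> \<comment> \<open>imp I\<close>
        (\<exists>A B. C = Imp A B \<and> (insert (A, w) \<Gamma>, B) \<in> S)
      \<or> \<comment> \<open>imp E\<close>
        (\<exists>A. (\<Gamma>, Imp A C) \<in> S \<and> (\<Gamma>, A) \<in> S)
      \<or> \<comment> \<open>dia I\<close>
        (\<exists>A w'. C = Dia A \<and> acc w w' \<and> (\<Gamma>, A) \<in> H w')
      \<or> \<comment> \<open>box I\<close>
        (\<exists>A. C = Box A \<and> (\<forall>w'. acc w w' \<longrightarrow> (\<Gamma>, A) \<in> H w'))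
      \<or> \<comment> \<open>dia E\<close>
        (\<exists>v A. acc\<^sup>*\<^sup>* w v \<and> (\<Gamma>, Dia A) \<in> P v \<and>
               (\<forall>w'. acc v w' \<longrightarrow> (\<Gamma>, A) \<in> H w' \<longrightarrow> (\<Gamma>, C) \<in> S))
      \<or> \<comment> \<open>box E\<close>
        (\<exists>v A. acc\<^sup>*\<^sup>* w v \<and> (\<Gamma>, Box A) \<in> P v \<and>
               ((\<forall>w'. acc v w' \<longrightarrow> (\<Gamma>, A) \<in> H w') \<longrightarrow> (\<Gamma>, C) \<in> S))})"

definition cpl_fam :: "('w \<Rightarrow> 'w \<Rightarrow> bool) \<Rightarrow> 'w \<Rightarrow> (('q, 'w) ctx \<times> 'q fml) set" where
  "cpl_fam acc = wfrec {(v, w). acc\<^sup>+\<^sup>+ w v} (\<lambda>H w. lfp (cpl_step acc H w))"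

definition cpl :: "('w \<Rightarrow> 'w \<Rightarrow> bool) \<Rightarrow> ('q, 'w) ctx \<Rightarrow> 'q fml \<Rightarrow> 'w \<Rightarrow> bool" where
  "cpl acc \<Gamma> A w \<longleftrightarrow> (\<Gamma>, A) \<in> cpl_fam acc w"

end

theory Submission
  imports Defs
begin
definition RR :: "('w \<Rightarrow> 'w \<Rightarrow> bool) \<Rightarrow> ('w \<times> 'w) set" where
  "RR acc = {(v, w). acc\<^sup>+\<^sup>+ w v}"

lemma wfRR: assumes "conv_wf acc" shows "wf (RR acc)"
proof -
  have "wf {(v, w). acc w v}"
    using assms unfolding conv_wf_def wf_iff_no_infinite_down_chain by auto
  then have "wf ({(v, w). acc w v}\<^sup>+)" by (rule wf_trancl)
  moreover have "{(v, w). acc w v}\<^sup>+ = RR acc"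
  proof -
    have "{(v, w). acc w v} = {(x,y). acc x y}\<inverse>" by auto
    then show ?thesis unfolding RR_def
      by (simp add: trancl_converse tranclp_unfold) auto
  qed
  ultimately show ?thesis by simp
qed

lemma irr: "conv_wf acc \<Longrightarrow> \<not> acc\<^sup>+\<^sup>+ w w"
  using wfRR[of acc] unfolding RR_def by (metis (mono_tags) case_prodI mem_Collect_eq wf_not_refl)

lemma step_cong1:
  assumes "\<And>v. acc\<^sup>+\<^sup>+ w v \<Longrightarrow> H v = H' v" and "x \<in> cpl_step acc H w S"
  shows "x \<in> cpl_step acc H' w S"
proof -
  have a: "acc\<^sup>*\<^sup>* w v \<Longrightarrow> v \<noteq> w \<Longrightarrow> H v = H' v" for v
    by (metis assms(1) rtranclpD)
  have b: "acc w v \<Longrightarrow> H v = H' v" for v using assms by auto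
  have c: "acc\<^sup>*\<^sup>* w v \<Longrightarrow> acc v u \<Longrightarrow> H u = H' u" for u v
    using assms by (meson rtranclp_into_tranclp1)
  obtain \<Gamma> C where x: "x = (\<Gamma>, C)" by fastforce
  show ?thesis using assms(2) unfolding cpl_step_def Let_def x
    apply (simp only: mem_Collect_eq case_prod_conv)
    apply (elim disjE exE conjE)
    subgoal by simp
    subgoal for v apply (rule disjI2, rule disjI1)
      apply (rule exI[of _ v]) apply (cases "v = w") apply (auto simp: a) done
    subgoal by simp
    subgoal by blast
    subgoal by (metis b)
    subgoal by (metis b)
    subgoal for v A apply (rule disjI2, rule disjI2, rule disjI2, rule disjI2, rule disjI2, rule disjI2, rule disjI1)
      apply (rule exI[of _ v], rule exI[of _ A]) apply (cases "v = w") apply (auto simp: a b c) done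
    subgoal for v A apply (rule disjI2, rule disjI2, rule disjI2, rule disjI2, rule disjI2, rule disjI2, rule disjI2)
      apply (rule exI[of _ v], rule exI[of _ A]) apply (cases "v = w") apply (auto simp: a b c) done
    done
qed

lemma step_cong:
  assumes "\<And>v. acc\<^sup>+\<^sup>+ w v \<Longrightarrow> H v = H' v"
  shows "cpl_step acc H w S = cpl_step acc H' w S"
  using step_cong1[of acc w H H'] step_cong1[of acc w H' H] assms by (metis subsetI subset_antisym)

lemma mono_step: "mono (cpl_step (acc :: 'w \<Rightarrow> 'w \<Rightarrow> bool) (H :: 'w \<Rightarrow> (('q,'w) ctx \<times> 'q fml) set) w)"
proof (rule monoI, rule subsetI)
  fix S S' :: "(('q, 'w) ctx \<times> 'q fml) set" and x
  assume sub: "S \<subseteq> S'" and xs: "x \<in> cpl_step acc H w S"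
  obtain \<Gamma> C where x: "x = (\<Gamma>, C)" by fastforce
  show "x \<in> cpl_step acc H w S'" using xs unfolding cpl_step_def Let_def x
    apply (simp only: mem_Collect_eq case_prod_conv)
    apply (elim disjE exE conjE)
    subgoal by simp
    subgoal for v apply (rule disjI2, rule disjI1)
      apply (rule exI[of _ v]) apply (cases "v = w") using sub apply auto done
    subgoal using sub by blast
    subgoal using sub by blast
    subgoal by blast
    subgoal by blast
    subgoal for v A apply (rule disjI2, rule disjI2, rule disjI2, rule disjI2, rule disjI2, rule disjI2, rule disjI1)
      apply (rule exI[of _ v], rule exI[of _ A]) apply (cases "v = w") using sub apply auto done
    subgoal for v A apply (rule disjI2, rule disjI2, rule disjI2, rule disjI2, rule disjI2, rule disjI2, rule disjI2)
      apply (rule exI[of _ v], rule exI[of _ A]) apply (cases "v = w") using sub apply auto done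
    done
qed

lemma fam_unfold:
  assumes "conv_wf acc"
  shows "cpl_fam acc w = lfp (cpl_step acc (cpl_fam acc) w)"
proof -
  have "cpl_fam acc w = lfp (cpl_step acc (cut (cpl_fam acc) (RR acc) w) w)"
    unfolding cpl_fam_def RR_def by (subst wfrec) (use wfRR[OF assms] in \<open>auto simp: RR_def\<close>)
  also have "cpl_step acc (cut (cpl_fam acc) (RR acc) w) w = cpl_step acc (cpl_fam acc) w"
    by (rule ext, rule step_cong) (auto simp: cut_def RR_def)
  finally show ?thesis .
qed

lemma cpl_fold:
  assumes "conv_wf acc" "(\<Gamma>, C) \<in> cpl_step acc (cpl_fam acc) w (cpl_fam acc w)"
  shows "cpl acc \<Gamma> C w"
  using assms unfolding cpl_def
  by (metis fam_unfold lfp_unfold mono_step)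

lemma PP: "(if v = w then cpl_fam acc w else cpl_fam acc v) = cpl_fam acc v" by simp

lemma cpl_hyp: "conv_wf acc \<Longrightarrow> (C, w) \<in> \<Gamma> \<Longrightarrow> cpl acc \<Gamma> C w"
  by (rule cpl_fold) (auto simp: cpl_step_def)
lemma cpl_botE: "conv_wf acc \<Longrightarrow> acc\<^sup>*\<^sup>* w v \<Longrightarrow> cpl acc \<Gamma> Bot v \<Longrightarrow> cpl acc \<Gamma> C w"
  by (rule cpl_fold) (auto simp: cpl_step_def cpl_def)
lemma cpl_impI: "conv_wf acc \<Longrightarrow> cpl acc (insert (A, w) \<Gamma>) B w \<Longrightarrow> cpl acc \<Gamma> (Imp A B) w"
  by (rule cpl_fold) (auto simp: cpl_step_def cpl_def)
lemma cpl_impE: "conv_wf acc \<Longrightarrow> cpl acc \<Gamma> (Imp A B) w \<Longrightarrow> cpl acc \<Gamma> A w \<Longrightarrow> cpl acc \<Gamma> B w"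
  by (rule cpl_fold) (auto simp: cpl_step_def cpl_def)
lemma cpl_diaI: "conv_wf acc \<Longrightarrow> acc w u \<Longrightarrow> cpl acc \<Gamma> A u \<Longrightarrow> cpl acc \<Gamma> (Dia A) w"
  by (rule cpl_fold) (auto simp: cpl_step_def cpl_def)
lemma cpl_boxI: "conv_wf acc \<Longrightarrow> (\<And>u. acc w u \<Longrightarrow> cpl acc \<Gamma> A u) \<Longrightarrow> cpl acc \<Gamma> (Box A) w"
  by (rule cpl_fold) (auto simp: cpl_step_def cpl_def)
lemma cpl_diaE: "conv_wf acc \<Longrightarrow> acc\<^sup>*\<^sup>* w v \<Longrightarrow> cpl acc \<Gamma> (Dia A) v
  \<Longrightarrow> (\<And>u. acc v u \<Longrightarrow> cpl acc \<Gamma> A u \<Longrightarrow> cpl acc \<Gamma> C w) \<Longrightarrow> cpl acc \<Gamma> C w"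
  apply (rule cpl_fold, assumption) unfolding cpl_step_def Let_def PP
  apply (simp only: mem_Collect_eq case_prod_conv)
  apply (rule disjI2, rule disjI2, rule disjI2, rule disjI2, rule disjI2, rule disjI2, rule disjI1)
  by (auto simp: cpl_def)
lemma cpl_boxE: "conv_wf acc \<Longrightarrow> acc\<^sup>*\<^sup>* w v \<Longrightarrow> cpl acc \<Gamma> (Box A) v
  \<Longrightarrow> ((\<And>u. acc v u \<Longrightarrow> cpl acc \<Gamma> A u) \<Longrightarrow> cpl acc \<Gamma> C w) \<Longrightarrow> cpl acc \<Gamma> C w"
  apply (rule cpl_fold, assumption) unfolding cpl_step_def Let_def PP
  apply (simp only: mem_Collect_eq case_prod_conv)
  apply (rule disjI2, rule disjI2, rule disjI2, rule disjI2, rule disjI2, rule disjI2, rule disjI2)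
  by (auto simp: cpl_def)

lemma cpl_induct[consumes 2, case_names hyp botE impI impE diaI boxI diaE boxE]:
  assumes wfa: "conv_wf acc" and der: "cpl acc \<Gamma> C w"
  and hyp: "\<And>\<Gamma> C. (C, w) \<in> \<Gamma> \<Longrightarrow> Q \<Gamma> C"
  and botE: "\<And>\<Gamma> C v. acc\<^sup>*\<^sup>* w v \<Longrightarrow> (if v = w then cpl acc \<Gamma> Bot w \<and> Q \<Gamma> Bot else cpl acc \<Gamma> Bot v) \<Longrightarrow> Q \<Gamma> C"
  and impI: "\<And>\<Gamma> A B. cpl acc (insert (A, w) \<Gamma>) B w \<Longrightarrow> Q (insert (A, w) \<Gamma>) B \<Longrightarrow> Q \<Gamma> (Imp A B)"
  and impE: "\<And>\<Gamma> A C. cpl acc \<Gamma> (Imp A C) w \<Longrightarrow> Q \<Gamma> (Imp A C) \<Longrightarrow> cpl acc \<Gamma> A w \<Longrightarrow> Q \<Gamma> A \<Longrightarrow> Q \<Gamma> C"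
  and diaI: "\<And>\<Gamma> A u. acc w u \<Longrightarrow> cpl acc \<Gamma> A u \<Longrightarrow> Q \<Gamma> (Dia A)"
  and boxI: "\<And>\<Gamma> A. (\<forall>u. acc w u \<longrightarrow> cpl acc \<Gamma> A u) \<Longrightarrow> Q \<Gamma> (Box A)"
  and diaE: "\<And>\<Gamma> C v A. acc\<^sup>*\<^sup>* w v \<Longrightarrow> (if v = w then cpl acc \<Gamma> (Dia A) w \<and> Q \<Gamma> (Dia A) else cpl acc \<Gamma> (Dia A) v)
     \<Longrightarrow> (\<forall>u. acc v u \<longrightarrow> cpl acc \<Gamma> A u \<longrightarrow> cpl acc \<Gamma> C w \<and> Q \<Gamma> C) \<Longrightarrow> Q \<Gamma> C"
  and boxE: "\<And>\<Gamma> C v A. acc\<^sup>*\<^sup>* w v \<Longrightarrow> (if v = w then cpl acc \<Gamma> (Box A) w \<and> Q \<Gamma> (Box A) else cpl acc \<Gamma> (Box A) v)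
     \<Longrightarrow> ((\<forall>u. acc v u \<longrightarrow> cpl acc \<Gamma> A u) \<longrightarrow> cpl acc \<Gamma> C w \<and> Q \<Gamma> C) \<Longrightarrow> Q \<Gamma> C"
  shows "Q \<Gamma> C"
proof -
  have "(\<Gamma>, C) \<in> lfp (cpl_step acc (cpl_fam acc) w)"
    using der fam_unfold[OF wfa] unfolding cpl_def by metis
  then have "(\<lambda>x. Q (fst x) (snd x)) (\<Gamma>, C)"
  proof (rule lfp_induct_set[OF _ mono_step])
    fix x
    assume 2: "x \<in> cpl_step acc (cpl_fam acc) w (lfp (cpl_step acc (cpl_fam acc) w) \<inter> {x. Q (fst x) (snd x)})"
    obtain G D where x: "x = (G, D)" by fastforce
    have L: "lfp (cpl_step acc (cpl_fam acc) w) = cpl_fam acc w" by (rule sym, rule fam_unfold[OF wfa])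
    have c: "\<And>G D. (G, D) \<in> cpl_fam acc w \<longleftrightarrow> cpl acc G D w" by (simp add: cpl_def)
    have d: "\<And>G D v. (G, D) \<in> cpl_fam acc v \<longleftrightarrow> cpl acc G D v" by (simp add: cpl_def)
    show "Q (fst x) (snd x)" using 2 unfolding x cpl_step_def Let_def L
      apply (simp only: mem_Collect_eq case_prod_conv fst_conv snd_conv)
      apply (elim disjE exE conjE)
      subgoal by (rule hyp)
      subgoal for v apply (rule botE[of v]) apply assumption apply (cases "v = w") apply (auto simp: d) done
      subgoal for A B by (simp add: impI d)
      subgoal for A by (rule impE[of _ A]) (auto simp: d)
      subgoal for A u by (simp add: diaI d)
      subgoal for A by (simp add: boxI d)
      subgoal for v A apply (rule diaE[of v _ A]) apply assumption apply (cases "v = w") apply (auto simp: d) done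
      subgoal for v A apply (rule boxE[of v _ A]) apply assumption apply (cases "v = w") apply (auto simp: d) done
      done
  qed
  then show ?thesis by simp
qed

lemma ctx_sub_up: "acc\<^sup>*\<^sup>* w u \<Longrightarrow> ctx_sub acc w G G' \<Longrightarrow> ctx_sub acc u G G'"
  unfolding ctx_sub_def by (meson rtranclp_trans rtranclp_tranclp_tranclp)

lemma ctx_sub_swap: "acc\<^sup>+\<^sup>+ w u \<Longrightarrow> ctx_sub acc w G G' \<Longrightarrow> ctx_sub acc u G' G"
  unfolding ctx_sub_def
  by (meson rtranclp_tranclp_tranclp tranclp_into_rtranclp tranclp_rtranclp_tranclp)

lemma ctx_sub_ins: "ctx_sub acc w G G' \<Longrightarrow> ctx_sub acc w (insert (A, w) G) (insert (A, w) G')"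
  unfolding ctx_sub_def by auto

lemma weak:
  fixes acc :: "'w \<Rightarrow> 'w \<Rightarrow> bool" and G G' :: "('q, 'w) ctx"
  assumes wfa: "conv_wf acc"
  shows "ctx_sub acc w G G' \<Longrightarrow> cpl acc G A w \<Longrightarrow> cpl acc G' A w"
proof (induction w arbitrary: G G' A rule: wf_induct[OF wfRR[OF wfa]])
  case (1 w)
  have IH: "\<And>u (G :: ('q, 'w) ctx) G' A. acc\<^sup>+\<^sup>+ w u \<Longrightarrow> ctx_sub acc u G G' \<Longrightarrow> cpl acc G A u \<Longrightarrow> cpl acc G' A u"
    using 1(1) by (simp add: RR_def)
  have "\<forall>G'. ctx_sub acc w G G' \<longrightarrow> cpl acc G' A w"
    using wfa 1(3)
  proof (induction rule: cpl_induct)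
    case (hyp \<Gamma> C)
    then show ?case unfolding ctx_sub_def using cpl_hyp[OF wfa] by blast
  next
    case (botE \<Gamma> C v)
    show ?case
    proof (intro allI HOL.impI)
      fix G' assume s: "ctx_sub acc w \<Gamma> G'"
      have "cpl acc G' Bot v"
      proof (cases "v = w")
        case True then show ?thesis using botE s by simp
      next
        case False
        then have "acc\<^sup>+\<^sup>+ w v" using botE(1) by (metis rtranclpD)
        then show ?thesis using botE(2) False IH[OF _ ctx_sub_up[OF botE(1) s]] by simp
      qed
      then show "cpl acc G' C w" using cpl_botE[OF wfa botE(1)] by blast
    qed
  next
    case (impI \<Gamma> A B)
    show ?case
    proof (intro allI HOL.impI)
      fix G' assume s: "ctx_sub acc w \<Gamma> G'"
      then show "cpl acc G' (Imp A B) w" using impI(2) ctx_sub_ins[OF s] cpl_impI[OF wfa] by blast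
    qed
  next
    case (impE \<Gamma> A C)
    then show ?case using cpl_impE[OF wfa] by blast
  next
    case (diaI \<Gamma> A u)
    show ?case
    proof (intro allI HOL.impI)
      fix G' assume s: "ctx_sub acc w \<Gamma> G'"
      have "cpl acc G' A u" using IH[OF _ ctx_sub_up[OF _ s]] diaI by auto
      then show "cpl acc G' (Dia A) w" using cpl_diaI[OF wfa diaI(1)] by blast
    qed
  next
    case (boxI \<Gamma> A)
    show ?case
    proof (intro allI HOL.impI)
      fix G' assume s: "ctx_sub acc w \<Gamma> G'"
      have "cpl acc G' A u" if "acc w u" for u using IH[OF _ ctx_sub_up[OF _ s]] boxI that by auto
      then show "cpl acc G' (Box A) w" using cpl_boxI[OF wfa] by blast
    qed
  next
    case (diaE \<Gamma> C v A)
    show ?case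
    proof (intro allI HOL.impI)
      fix G' assume s: "ctx_sub acc w \<Gamma> G'"
      have "cpl acc G' (Dia A) v"
      proof (cases "v = w")
        case True then show ?thesis using diaE s by simp
      next
        case False
        then have "acc\<^sup>+\<^sup>+ w v" using diaE(1) by (metis rtranclpD)
        then show ?thesis using diaE(2) False IH[OF _ ctx_sub_up[OF diaE(1) s]] by simp
      qed
      moreover have "cpl acc G' C w" if "acc v u" "cpl acc G' A u" for u
      proof -
        have wu: "acc\<^sup>+\<^sup>+ w u" using diaE(1) that(1) by (meson rtranclp_into_tranclp1)
        have "cpl acc \<Gamma> A u" using IH[OF wu ctx_sub_swap[OF wu s] that(2)] .
        then show ?thesis using diaE(3) that(1) s by simp
      qed
      ultimately show "cpl acc G' C w" using cpl_diaE[OF wfa diaE(1)] by blast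
    qed
  next
    case (boxE \<Gamma> C v A)
    show ?case
    proof (intro allI HOL.impI)
      fix G' assume s: "ctx_sub acc w \<Gamma> G'"
      have "cpl acc G' (Box A) v"
      proof (cases "v = w")
        case True then show ?thesis using boxE s by simp
      next
        case False
        then have "acc\<^sup>+\<^sup>+ w v" using boxE(1) by (metis rtranclpD)
        then show ?thesis using boxE(2) False IH[OF _ ctx_sub_up[OF boxE(1) s]] by simp
      qed
      moreover have "cpl acc G' C w" if h: "\<And>u. acc v u \<Longrightarrow> cpl acc G' A u"
      proof -
        have "cpl acc \<Gamma> A u" if "acc v u" for u
        proof -
          have wu: "acc\<^sup>+\<^sup>+ w u" using boxE(1) that by (meson rtranclp_into_tranclp1)
          show ?thesis using IH[OF wu ctx_sub_swap[OF wu s] h[OF that]] .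
        qed
        then show ?thesis using boxE(3) s by simp
      qed
      ultimately show "cpl acc G' C w" using cpl_boxE[OF wfa boxE(1)] by blast
    qed
  qed
  then show ?case using 1(2) by blast
qed

lemma sub_out1: "\<not> acc\<^sup>*\<^sup>* u w \<Longrightarrow> ctx_sub acc u (insert (A, w) G) G"
  unfolding ctx_sub_def by auto
lemma sub_out2: "\<not> acc\<^sup>*\<^sup>* u w \<Longrightarrow> ctx_sub acc u G (insert (A, w) G)"
  unfolding ctx_sub_def by (auto dest: tranclp_into_rtranclp)
lemma sub_low: "\<not> acc\<^sup>+\<^sup>+ w w' \<Longrightarrow> ctx_sub acc w G (insert (B, w') G)"
  unfolding ctx_sub_def by auto

lemma subst_both:
  fixes acc :: "'w \<Rightarrow> 'w \<Rightarrow> bool" and G :: "('q, 'w) ctx"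
  assumes wfa: "conv_wf acc"
  shows "acc\<^sup>*\<^sup>* w' w \<Longrightarrow> cpl acc G A w \<Longrightarrow>
    (cpl acc (insert (A, w) G) C w' \<longrightarrow> cpl acc G C w') \<and> (cpl acc G C w' \<longrightarrow> cpl acc (insert (A, w) G) C w')"
proof (induction w' arbitrary: G C rule: wf_induct[OF wfRR[OF wfa]])
  case (1 w')
  have IH: "\<And>u (G :: ('q, 'w) ctx) C. acc\<^sup>+\<^sup>+ w' u \<Longrightarrow> acc\<^sup>*\<^sup>* u w \<Longrightarrow> cpl acc G A w \<Longrightarrow>
    (cpl acc (insert (A, w) G) C u \<longrightarrow> cpl acc G C u) \<and> (cpl acc G C u \<longrightarrow> cpl acc (insert (A, w) G) C u)"
    using 1(1) by (simp add: RR_def)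
  have hi: "cpl acc (insert (A, w) G) X u \<longleftrightarrow> cpl acc G X u"
    if "acc\<^sup>+\<^sup>+ w' u" "cpl acc G A w" for u and G :: "('q, 'w) ctx" and X
  proof (cases "acc\<^sup>*\<^sup>* u w")
    case True then show ?thesis using IH[OF that(1) True that(2)] by blast
  next
    case False then show ?thesis using weak[OF wfa sub_out1[OF False]] weak[OF wfa sub_out2[OF False]] by blast
  qed
  have lowB: "\<not> acc\<^sup>+\<^sup>+ w w'"
    using irr[OF wfa] 1(2) by (metis tranclp_rtranclp_tranclp)
  have fwd: "\<forall>G. D = insert (A, w) G \<longrightarrow> cpl acc G A w \<longrightarrow> cpl acc G C w'"
    if "cpl acc D C w'" for D :: "('q, 'w) ctx" and C
    using wfa that
  proof (induction rule: cpl_induct)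
    case (hyp \<Gamma> C)
    show ?case
    proof (intro allI HOL.impI)
      fix G assume e: "\<Gamma> = insert (A, w) G" and a: "cpl acc G A w"
      show "cpl acc G C w'"
      proof (cases "(C, w') = (A, w)")
        case True then show ?thesis using a by simp
      next
        case False then show ?thesis using hyp e cpl_hyp[OF wfa] by blast
      qed
    qed
  next
    case (botE \<Gamma> C v)
    show ?case
    proof (intro allI HOL.impI)
      fix G assume e: "\<Gamma> = insert (A, w) G" and a: "cpl acc G A w"
      have "cpl acc G Bot v"
      proof (cases "v = w'")
        case True then show ?thesis using botE(2) e a by simp
      next
        case False
        then have "acc\<^sup>+\<^sup>+ w' v" using botE(1) by (metis rtranclpD)
        then show ?thesis using botE(2) False hi a e by simp
      qed
      then show "cpl acc G C w'" using cpl_botE[OF wfa botE(1)] by blast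
    qed
  next
    case (impI \<Gamma> A' B)
    show ?case
    proof (intro allI HOL.impI)
      fix G assume e: "\<Gamma> = insert (A, w) G" and a: "cpl acc G A w"
      have a': "cpl acc (insert (A', w') G) A w" using weak[OF wfa sub_low[OF lowB] a] .
      have "insert (A', w') \<Gamma> = insert (A, w) (insert (A', w') G)" using e by auto
      then have "cpl acc (insert (A', w') G) B w'" using impI(2)[rule_format, OF _ a'] by blast
      then show "cpl acc G (Imp A' B) w'" using cpl_impI[OF wfa] by blast
    qed
  next
    case (impE \<Gamma> A' C)
    show ?case
    proof (intro allI HOL.impI)
      fix G assume e: "\<Gamma> = insert (A, w) G" and a: "cpl acc G A w"
      show "cpl acc G C w'" using impE(3)[rule_format, OF e a] impE(4)[rule_format, OF e a] by (rule cpl_impE[OF wfa])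
    qed
  next
    case (diaI \<Gamma> A' u)
    show ?case
    proof (intro allI HOL.impI)
      fix G assume e: "\<Gamma> = insert (A, w) G" and a: "cpl acc G A w"
      have "cpl acc G A' u" using hi[of u G A'] diaI a e by auto
      then show "cpl acc G (Dia A') w'" using cpl_diaI[OF wfa diaI(1)] by blast
    qed
  next
    case (boxI \<Gamma> A')
    show ?case
    proof (intro allI HOL.impI)
      fix G assume e: "\<Gamma> = insert (A, w) G" and a: "cpl acc G A w"
      have "cpl acc G A' u" if "acc w' u" for u using hi[of u G A'] boxI a e that by auto
      then show "cpl acc G (Box A') w'" using cpl_boxI[OF wfa] by blast
    qed
  next
    case (diaE \<Gamma> C v A')
    show ?case
    proof (intro allI HOL.impI)
      fix G assume e: "\<Gamma> = insert (A, w) G" and a: "cpl acc G A w"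
      have "cpl acc G (Dia A') v"
      proof (cases "v = w'")
        case True then show ?thesis using diaE(2) e a by simp
      next
        case False
        then have "acc\<^sup>+\<^sup>+ w' v" using diaE(1) by (metis rtranclpD)
        then show ?thesis using diaE(2) False hi a e by simp
      qed
      moreover have "cpl acc G C w'" if "acc v u" "cpl acc G A' u" for u
      proof -
        have wu: "acc\<^sup>+\<^sup>+ w' u" using diaE(1) that(1) by (meson rtranclp_into_tranclp1)
        have "cpl acc \<Gamma> A' u" using hi[OF wu a] that(2) e by simp
        then show ?thesis using diaE(3) that(1) e a by simp
      qed
      ultimately show "cpl acc G C w'" using cpl_diaE[OF wfa diaE(1)] by blast
    qed
  next
    case (boxE \<Gamma> C v A')
    show ?case
    proof (intro allI HOL.impI)
      fix G assume e: "\<Gamma> = insert (A, w) G" and a: "cpl acc G A w"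
      have "cpl acc G (Box A') v"
      proof (cases "v = w'")
        case True then show ?thesis using boxE(2) e a by simp
      next
        case False
        then have "acc\<^sup>+\<^sup>+ w' v" using boxE(1) by (metis rtranclpD)
        then show ?thesis using boxE(2) False hi a e by simp
      qed
      moreover have "cpl acc G C w'" if h: "\<And>u. acc v u \<Longrightarrow> cpl acc G A' u"
      proof -
        have "cpl acc \<Gamma> A' u" if "acc v u" for u
        proof -
          have wu: "acc\<^sup>+\<^sup>+ w' u" using boxE(1) that by (meson rtranclp_into_tranclp1)
          show ?thesis using hi[OF wu a] h[OF that] e by simp
        qed
        then show ?thesis using boxE(3) e a by simp
      qed
      ultimately show "cpl acc G C w'" using cpl_boxE[OF wfa boxE(1)] by blast
    qed
  qed
  have rev: "cpl acc G A w \<longrightarrow> cpl acc (insert (A, w) G) C w'"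
    if "cpl acc G C w'" for G :: "('q, 'w) ctx" and C
    using wfa that
  proof (induction rule: cpl_induct)
    case (hyp \<Gamma> C)
    then show ?case using cpl_hyp[OF wfa] by blast
  next
    case (botE \<Gamma> C v)
    show ?case
    proof
      assume a: "cpl acc \<Gamma> A w"
      have "cpl acc (insert (A, w) \<Gamma>) Bot v"
      proof (cases "v = w'")
        case True then show ?thesis using botE(2) a by simp
      next
        case False
        then have "acc\<^sup>+\<^sup>+ w' v" using botE(1) by (metis rtranclpD)
        then show ?thesis using botE(2) False hi a by simp
      qed
      then show "cpl acc (insert (A, w) \<Gamma>) C w'" using cpl_botE[OF wfa botE(1)] by blast
    qed
  next
    case (impI \<Gamma> A' B)
    show ?case
    proof
      assume a: "cpl acc \<Gamma> A w"
      have a': "cpl acc (insert (A', w') \<Gamma>) A w" using weak[OF wfa sub_low[OF lowB] a] .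
      have "insert (A, w) (insert (A', w') \<Gamma>) = insert (A', w') (insert (A, w) \<Gamma>)" by auto
      then have "cpl acc (insert (A', w') (insert (A, w) \<Gamma>)) B w'" using impI(2)[rule_format, OF a'] by simp
      then show "cpl acc (insert (A, w) \<Gamma>) (Imp A' B) w'" using cpl_impI[OF wfa] by blast
    qed
  next
    case (impE \<Gamma> A' C)
    show ?case
    proof
      assume a: "cpl acc \<Gamma> A w"
      show "cpl acc (insert (A, w) \<Gamma>) C w'" using impE(3)[rule_format, OF a] impE(4)[rule_format, OF a] by (rule cpl_impE[OF wfa])
    qed
  next
    case (diaI \<Gamma> A' u)
    show ?case
    proof
      assume a: "cpl acc \<Gamma> A w"
      have "cpl acc (insert (A, w) \<Gamma>) A' u" using hi[of u \<Gamma> A'] diaI a by auto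
      then show "cpl acc (insert (A, w) \<Gamma>) (Dia A') w'" using cpl_diaI[OF wfa diaI(1)] by blast
    qed
  next
    case (boxI \<Gamma> A')
    show ?case
    proof
      assume a: "cpl acc \<Gamma> A w"
      have "cpl acc (insert (A, w) \<Gamma>) A' u" if "acc w' u" for u using hi[of u \<Gamma> A'] boxI a that by auto
      then show "cpl acc (insert (A, w) \<Gamma>) (Box A') w'" using cpl_boxI[OF wfa] by blast
    qed
  next
    case (diaE \<Gamma> C v A')
    show ?case
    proof
      assume a: "cpl acc \<Gamma> A w"
      have "cpl acc (insert (A, w) \<Gamma>) (Dia A') v"
      proof (cases "v = w'")
        case True then show ?thesis using diaE(2) a by simp
      next
        case False
        then have "acc\<^sup>+\<^sup>+ w' v" using diaE(1) by (metis rtranclpD)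
        then show ?thesis using diaE(2) False hi a by simp
      qed
      moreover have "cpl acc (insert (A, w) \<Gamma>) C w'" if "acc v u" "cpl acc (insert (A, w) \<Gamma>) A' u" for u
      proof -
        have wu: "acc\<^sup>+\<^sup>+ w' u" using diaE(1) that(1) by (meson rtranclp_into_tranclp1)
        have "cpl acc \<Gamma> A' u" using hi[OF wu a] that(2) by simp
        then show ?thesis using diaE(3) that(1) a by simp
      qed
      ultimately show "cpl acc (insert (A, w) \<Gamma>) C w'" using cpl_diaE[OF wfa diaE(1)] by blast
    qed
  next
    case (boxE \<Gamma> C v A')
    show ?case
    proof
      assume a: "cpl acc \<Gamma> A w"
      have "cpl acc (insert (A, w) \<Gamma>) (Box A') v"
      proof (cases "v = w'")
        case True then show ?thesis using boxE(2) a by simp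
      next
        case False
        then have "acc\<^sup>+\<^sup>+ w' v" using boxE(1) by (metis rtranclpD)
        then show ?thesis using boxE(2) False hi a by simp
      qed
      moreover have "cpl acc (insert (A, w) \<Gamma>) C w'" if h: "\<And>u. acc v u \<Longrightarrow> cpl acc (insert (A, w) \<Gamma>) A' u"
      proof -
        have "cpl acc \<Gamma> A' u" if "acc v u" for u
        proof -
          have wu: "acc\<^sup>+\<^sup>+ w' u" using boxE(1) that by (meson rtranclp_into_tranclp1)
          show ?thesis using hi[OF wu a] h[OF that] by simp
        qed
        then show ?thesis using boxE(3) a by simp
      qed
      ultimately show "cpl acc (insert (A, w) \<Gamma>) C w'" using cpl_boxE[OF wfa boxE(1)] by blast
    qed
  qed
  show ?case
  proof (intro conjI HOL.impI)
    assume c: "cpl acc (insert (A, w) G) C w'"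
    show "cpl acc G C w'" using fwd[OF c, rule_format, OF refl 1(3)] .
  next
    assume c: "cpl acc G C w'"
    show "cpl acc (insert (A, w) G) C w'" using rev[OF c, rule_format, OF 1(3)] .
  qed
qed

theorem theorem4:
  fixes acc :: "'w \<Rightarrow> 'w \<Rightarrow> bool"
  assumes "conv_wf acc"
  shows "(\<forall>(\<Gamma> :: ('q, 'w) ctx) A w. finite \<Gamma> \<longrightarrow> (A, w) \<in> \<Gamma> \<longrightarrow> cpl acc \<Gamma> A w)
       \<and> (\<forall>(\<Gamma> :: ('q, 'w) ctx) \<Gamma>' A w. finite \<Gamma> \<longrightarrow> finite \<Gamma>' \<longrightarrow>
            ctx_sub acc w \<Gamma> \<Gamma>' \<longrightarrow> cpl acc \<Gamma> A w \<longrightarrow> cpl acc \<Gamma>' A w)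
       \<and> (\<forall>(\<Gamma> :: ('q, 'w) ctx) A C w w'. finite \<Gamma> \<longrightarrow> acc\<^sup>*\<^sup>* w' w \<longrightarrow>
            cpl acc \<Gamma> A w \<longrightarrow> cpl acc (insert (A, w) \<Gamma>) C w' \<longrightarrow> cpl acc \<Gamma> C w')"
proof (intro conjI allI HOL.impI)
  fix \<Gamma> :: "('q, 'w) ctx" and A w
  assume "(A, w) \<in> \<Gamma>" then show "cpl acc \<Gamma> A w" by (rule cpl_hyp[OF assms])
next
  fix \<Gamma> \<Gamma>' :: "('q, 'w) ctx" and A w
  assume "ctx_sub acc w \<Gamma> \<Gamma>'" "cpl acc \<Gamma> A w"
  then show "cpl acc \<Gamma>' A w" by (rule weak[OF assms])
next
  fix \<Gamma> :: "('q, 'w) ctx" and A C w w'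
  assume "acc\<^sup>*\<^sup>* w' w" "cpl acc \<Gamma> A w" "cpl acc (insert (A, w) \<Gamma>) C w'"
  then show "cpl acc \<Gamma> C w'" using subst_both[OF assms, of w' w \<Gamma> A C] by simp
qed

end
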